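(* Let $\mathcal V$ be braided monoidal closed and complete, and let $A$ be a semi-Hopf $\mathcal V$-category with object set $X$ whose underlying $\mathcal V$-category is Frobenius. Then $\int^\ell_{A,x}\cong I$ in $\mathcal V$ for all $x\in X$. More precisely, if $(e,\nu)$ is a Frobenius system, the morphism $u_x\colon I\to\int^\ell_{A,x}$ induced by the left integral family $t^{yx}=(1\otimes\epsilon_{xy})\circ e^{yx}$ is an isomorphism with inverse $\nu_x\circ\tau_{xx}$.
   Context: $\mathcal V$: braided monoidal closed with all limits, tensor $\otimes$, unit $I$, braiding $\sigma$. A $\mathcal V$-category $A$ with object set $X$: objects $A_{x,y}$, compositions $m_{xyz}\colon A_{x,y}\otimes A_{y,z}\to A_{x,z}$, units $j_x\colon I\to A_{x,x}$, associative and unital. Semi-Hopf: each $A_{x,y}$ is a comonoid $(\delta_{xy},\epsilon_{xy})$ in $\mathcal V$ with all $m_{xyz},j_x$ comonoid morphisms. Casimir family: morphisms $e^{xy}\colon I\to A_{x,y}\otimes A_{y,x}$ with $(m_{zxy}\otimes1)\circ(1_{A_{z,x}}\otimes e^{xy})=(1\otimes m_{yzx})\circ(e^{zy}\otimes1_{A_{z,x}})$ for all $x,y,z$. A Frobenius system is a Casimir family $e$ together with morphisms $\nu_x\colon A_{x,x}\to I$ ($x\in X$) such that $(\nu_x\otimes1)\circ e^{xx}=j_x=(1\otimes\nu_x)\circ e^{xx}$. A $\mathcal V$-category is Frobenius if it admits a Frobenius system. Left integral space: for $z\in X$, $\int^\ell_{A,z}$ is the object with morphisms $\tau_{yz}\colon\int^\ell_{A,z}\to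 A_{y,z}$ ($y\in X$) satisfying $m_{xyz}\circ(1_{A_{x,y}}\otimes\tau_{yz})=\epsilon_{xy}\otimes\tau_{xz}$ for all $x,y$, universal among objects $W$ with families $w_y\colon W\to A_{y,z}$ satisfying the same equations (unique factorization). Morphisms $I\to\int^\ell_{A,z}$ thus correspond to families $t^{yz}\colon I\to A_{y,z}$ with $m_{xyz}\circ(1\otimes t^{yz})=t^{xz}\circ\epsilon_{xy}$. *)

theory Defs
  imports Main
begin

text \<open>A monoidal category with explicit coherence data. Objects are all elements
of type 'o; morphisms are the elements f of type 'm with mArr C f.
mComp C g f is the composite g after f.\<close>

record ('o, 'm) moncat =
  mArr :: "'m \<Rightarrow> bool"
  mDom :: "'m \<Rightarrow> 'o"
  mCod :: "'m \<Rightarrow> 'o"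
  mComp :: "'m \<Rightarrow> 'm \<Rightarrow> 'm"
  mId :: "'o \<Rightarrow> 'm"
  mTensO :: "'o \<Rightarrow> 'o \<Rightarrow> 'o"
  mTens :: "'m \<Rightarrow> 'm \<Rightarrow> 'm"
  mUnit :: 'o
  mAssoc :: "'o \<Rightarrow> 'o \<Rightarrow> 'o \<Rightarrow> 'm"
  mLu :: "'o \<Rightarrow> 'm"
  mRu :: "'o \<Rightarrow> 'm"
  mBraid :: "'o \<Rightarrow> 'o \<Rightarrow> 'm"

definition hom :: "('o, 'm) moncat \<Rightarrow> 'm \<Rightarrow> 'o \<Rightarrow> 'o \<Rightarrow> bool" where
  "hom C f a b \<longleftrightarrow> mArr C f \<and> mDom C f = a \<and> mCod C f = b"

definition inverse_pair :: "('o, 'm) moncat \<Rightarrow> 'm \<Rightarrow> 'm \<Rightarrow> bool" where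
  "inverse_pair C f g \<longleftrightarrow> hom C f (mDom C f) (mCod C f) \<and> hom C g (mCod C f) (mDom C f)
     \<and> mComp C g f = mId C (mDom C f) \<and> mComp C f g = mId C (mCod C f)"

definition is_iso :: "('o, 'm) moncat \<Rightarrow> 'm \<Rightarrow> bool" where
  "is_iso C f \<longleftrightarrow> (\<exists>g. inverse_pair C f g)"

definition mInv :: "('o, 'm) moncat \<Rightarrow> 'm \<Rightarrow> 'm" where
  "mInv C f = (SOME g. inverse_pair C f g)"

definition category :: "('o, 'm) moncat \<Rightarrow> bool" where
  "category C \<longleftrightarrow>
     (\<forall>a. hom C (mId C a) a a)
   \<and> (\<forall>f. mArr C f \<longrightarrow> mComp C (mId C (mCod C f)) f = f \<and> mComp C f (mId C (mDom C f)) = f)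
   \<and> (\<forall>f g. mArr C f \<and> mArr C g \<and> mCod C f = mDom C g \<longrightarrow>
          hom C (mComp C g f) (mDom C f) (mCod C g))
   \<and> (\<forall>f g h. mArr C f \<and> mArr C g \<and> mArr C h \<and> mCod C f = mDom C g \<and> mCod C g = mDom C h \<longrightarrow>
          mComp C h (mComp C g f) = mComp C (mComp C h g) f)"

definition monoidal_category :: "('o, 'm) moncat \<Rightarrow> bool" where
  "monoidal_category C \<longleftrightarrow> category C
   \<comment> \<open>tensor is a bifunctor\<close>
   \<and> (\<forall>f g. mArr C f \<and> mArr C g \<longrightarrow>
        hom C (mTens C f g) (mTensO C (mDom C f) (mDom C g)) (mTensO C (mCod C f) (mCod C g)))
   \<and> (\<forall>a b. mTens C (mId C a) (mId C b) = mId C (mTensO C a b))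
   \<and> (\<forall>f g h k. mArr C f \<and> mArr C g \<and> mArr C h \<and> mArr C k \<and> mCod C f = mDom C g \<and> mCod C h = mDom C k
        \<longrightarrow> mTens C (mComp C g f) (mComp C k h) = mComp C (mTens C g k) (mTens C f h))
   \<comment> \<open>associator: natural isomorphism\<close>
   \<and> (\<forall>a b c. hom C (mAssoc C a b c) (mTensO C (mTensO C a b) c) (mTensO C a (mTensO C b c))
                \<and> is_iso C (mAssoc C a b c))
   \<and> (\<forall>f g h. mArr C f \<and> mArr C g \<and> mArr C h \<longrightarrow>
        mComp C (mAssoc C (mCod C f) (mCod C g) (mCod C h)) (mTens C (mTens C f g) h)
        = mComp C (mTens C f (mTens C g h)) (mAssoc C (mDom C f) (mDom C g) (mDom C h)))
   \<comment> \<open>left and right unitors: natural isomorphisms\<close>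
   \<and> (\<forall>a. hom C (mLu C a) (mTensO C (mUnit C) a) a \<and> is_iso C (mLu C a))
   \<and> (\<forall>a. hom C (mRu C a) (mTensO C a (mUnit C)) a \<and> is_iso C (mRu C a))
   \<and> (\<forall>f. mArr C f \<longrightarrow>
        mComp C (mLu C (mCod C f)) (mTens C (mId C (mUnit C)) f) = mComp C f (mLu C (mDom C f)))
   \<and> (\<forall>f. mArr C f \<longrightarrow>
        mComp C (mRu C (mCod C f)) (mTens C f (mId C (mUnit C))) = mComp C f (mRu C (mDom C f)))
   \<comment> \<open>pentagon\<close>
   \<and> (\<forall>a b c d.
        mComp C (mAssoc C a b (mTensO C c d)) (mAssoc C (mTensO C a b) c d)
        = mComp C (mTens C (mId C a) (mAssoc C b c d))
            (mComp C (mAssoc C a (mTensO C b c) d) (mTens C (mAssoc C a b c) (mId C d))))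
   \<comment> \<open>triangle\<close>
   \<and> (\<forall>a b. mComp C (mTens C (mId C a) (mLu C b)) (mAssoc C a (mUnit C) b)
             = mTens C (mRu C a) (mId C b))"

definition braided_monoidal_category :: "('o, 'm) moncat \<Rightarrow> bool" where
  "braided_monoidal_category C \<longleftrightarrow> monoidal_category C
   \<and> (\<forall>a b. hom C (mBraid C a b) (mTensO C a b) (mTensO C b a) \<and> is_iso C (mBraid C a b))
   \<and> (\<forall>f g. mArr C f \<and> mArr C g \<longrightarrow>
        mComp C (mBraid C (mCod C f) (mCod C g)) (mTens C f g)
        = mComp C (mTens C g f) (mBraid C (mDom C f) (mDom C g)))
   \<comment> \<open>hexagons\<close>
   \<and> (\<forall>a b c.
        mComp C (mAssoc C b c a) (mComp C (mBraid C a (mTensO C b c)) (mAssoc C a b c))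
        = mComp C (mTens C (mId C b) (mBraid C a c))
            (mComp C (mAssoc C b a c) (mTens C (mBraid C a b) (mId C c))))
   \<and> (\<forall>a b c.
        mComp C (mInv C (mAssoc C c a b)) (mComp C (mBraid C (mTensO C a b) c) (mInv C (mAssoc C a b c)))
        = mComp C (mTens C (mBraid C a c) (mId C b))
            (mComp C (mInv C (mAssoc C a c b)) (mTens C (mId C a) (mBraid C b c))))"

text \<open>Closedness: each functor (-) tensor b has a right adjoint, given by internal homs
with evaluation morphisms.\<close>

definition monoidal_closed :: "('o, 'm) moncat \<Rightarrow> bool" where
  "monoidal_closed C \<longleftrightarrow>
     (\<forall>b c. \<exists>h ev. hom C ev (mTensO C h b) c
        \<and> (\<forall>a f. hom C f (mTensO C a b) c \<longrightarrow>
              (\<exists>!g. hom C g a h \<and> mComp C ev (mTens C g (mId C b)) = f)))"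

definition braided_monoidal_closed :: "('o, 'm) moncat \<Rightarrow> bool" where
  "braided_monoidal_closed C \<longleftrightarrow> braided_monoidal_category C \<and> monoidal_closed C"

definition comonoid :: "('o, 'm) moncat \<Rightarrow> 'o \<Rightarrow> 'm \<Rightarrow> 'm \<Rightarrow> bool" where
  "comonoid C c d e \<longleftrightarrow>
     hom C d c (mTensO C c c) \<and> hom C e c (mUnit C)
   \<and> mComp C (mAssoc C c c c) (mComp C (mTens C d (mId C c)) d) = mComp C (mTens C (mId C c) d) d
   \<and> mComp C (mLu C c) (mComp C (mTens C e (mId C c)) d) = mId C c
   \<and> mComp C (mRu C c) (mComp C (mTens C (mId C c) e) d) = mId C c"

definition comonoid_hom :: "('o, 'm) moncat \<Rightarrow> 'm \<Rightarrow> 'm \<Rightarrow> 'm \<Rightarrow> 'm \<Rightarrow> 'm \<Rightarrow> bool" where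
  "comonoid_hom C f d e d' e' \<longleftrightarrow>
     mComp C d' f = mComp C (mTens C f f) d \<and> mComp C e' f = e"

text \<open>Tensor product comonoid structure on a tensor b (uses the braiding).\<close>

definition tens_comult :: "('o, 'm) moncat \<Rightarrow> 'o \<Rightarrow> 'o \<Rightarrow> 'm \<Rightarrow> 'm \<Rightarrow> 'm" where
  "tens_comult C a b da db =
     mComp C (mInv C (mAssoc C a b (mTensO C a b)))
     (mComp C (mTens C (mId C a) (mAssoc C b a b))
     (mComp C (mTens C (mId C a) (mTens C (mBraid C a b) (mId C b)))
     (mComp C (mTens C (mId C a) (mInv C (mAssoc C a b b)))
     (mComp C (mAssoc C a a (mTensO C b b))
       (mTens C da db)))))"

definition tens_counit :: "('o, 'm) moncat \<Rightarrow> 'm \<Rightarrow> 'm \<Rightarrow> 'm" where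
  "tens_counit C ea eb = mComp C (mLu C (mUnit C)) (mTens C ea eb)"

definition vcategory :: "('o, 'm) moncat \<Rightarrow> 'x set \<Rightarrow> ('x \<Rightarrow> 'x \<Rightarrow> 'o)
    \<Rightarrow> ('x \<Rightarrow> 'x \<Rightarrow> 'x \<Rightarrow> 'm) \<Rightarrow> ('x \<Rightarrow> 'm) \<Rightarrow> bool" where
  "vcategory C X A m j \<longleftrightarrow>
     (\<forall>x\<in>X. \<forall>y\<in>X. \<forall>z\<in>X. hom C (m x y z) (mTensO C (A x y) (A y z)) (A x z))
   \<and> (\<forall>x\<in>X. hom C (j x) (mUnit C) (A x x))
   \<and> (\<forall>x\<in>X. \<forall>y\<in>X. \<forall>z\<in>X. \<forall>w\<in>X.
        mComp C (m x z w) (mTens C (m x y z) (mId C (A z w)))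
        = mComp C (m x y w) (mComp C (mTens C (mId C (A x y)) (m y z w)) (mAssoc C (A x y) (A y z) (A z w))))
   \<and> (\<forall>x\<in>X. \<forall>y\<in>X. mComp C (m x x y) (mTens C (j x) (mId C (A x y))) = mLu C (A x y))
   \<and> (\<forall>x\<in>X. \<forall>y\<in>X. mComp C (m x y y) (mTens C (mId C (A x y)) (j y)) = mRu C (A x y))"

definition semi_hopf_vcategory :: "('o, 'm) moncat \<Rightarrow> 'x set \<Rightarrow> ('x \<Rightarrow> 'x \<Rightarrow> 'o)
    \<Rightarrow> ('x \<Rightarrow> 'x \<Rightarrow> 'x \<Rightarrow> 'm) \<Rightarrow> ('x \<Rightarrow> 'm) \<Rightarrow> ('x \<Rightarrow> 'x \<Rightarrow> 'm) \<Rightarrow> ('x \<Rightarrow> 'x \<Rightarrow> 'm) \<Rightarrow> bool" where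
  "semi_hopf_vcategory C X A m j \<delta> \<epsilon> \<longleftrightarrow> vcategory C X A m j
   \<and> (\<forall>x\<in>X. \<forall>y\<in>X. comonoid C (A x y) (\<delta> x y) (\<epsilon> x y))
   \<and> (\<forall>x\<in>X. \<forall>y\<in>X. \<forall>z\<in>X.
        comonoid_hom C (m x y z)
          (tens_comult C (A x y) (A y z) (\<delta> x y) (\<delta> y z)) (tens_counit C (\<epsilon> x y) (\<epsilon> y z))
          (\<delta> x z) (\<epsilon> x z))
   \<and> (\<forall>x\<in>X. comonoid_hom C (j x) (mInv C (mLu C (mUnit C))) (mId C (mUnit C)) (\<delta> x x) (\<epsilon> x x))"

definition casimir_family :: "('o, 'm) moncat \<Rightarrow> 'x set \<Rightarrow> ('x \<Rightarrow> 'x \<Rightarrow> 'o)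
    \<Rightarrow> ('x \<Rightarrow> 'x \<Rightarrow> 'x \<Rightarrow> 'm) \<Rightarrow> ('x \<Rightarrow> 'x \<Rightarrow> 'm) \<Rightarrow> bool" where
  "casimir_family C X A m e \<longleftrightarrow>
     (\<forall>x\<in>X. \<forall>y\<in>X. hom C (e x y) (mUnit C) (mTensO C (A x y) (A y x)))
   \<and> (\<forall>x\<in>X. \<forall>y\<in>X. \<forall>z\<in>X.
        mComp C (mTens C (m z x y) (mId C (A y x)))
          (mComp C (mInv C (mAssoc C (A z x) (A x y) (A y x)))
          (mComp C (mTens C (mId C (A z x)) (e x y)) (mInv C (mRu C (A z x)))))
        = mComp C (mTens C (mId C (A z y)) (m y z x))
          (mComp C (mAssoc C (A z y) (A y z) (A z x))
          (mComp C (mTens C (e z y) (mId C (A z x))) (mInv C (mLu C (A z x))))))"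

definition frobenius_system :: "('o, 'm) moncat \<Rightarrow> 'x set \<Rightarrow> ('x \<Rightarrow> 'x \<Rightarrow> 'o)
    \<Rightarrow> ('x \<Rightarrow> 'x \<Rightarrow> 'x \<Rightarrow> 'm) \<Rightarrow> ('x \<Rightarrow> 'm) \<Rightarrow> ('x \<Rightarrow> 'x \<Rightarrow> 'm) \<Rightarrow> ('x \<Rightarrow> 'm) \<Rightarrow> bool" where
  "frobenius_system C X A m j e \<nu> \<longleftrightarrow> casimir_family C X A m e
   \<and> (\<forall>x\<in>X. hom C (\<nu> x) (A x x) (mUnit C))
   \<and> (\<forall>x\<in>X. mComp C (mLu C (A x x)) (mComp C (mTens C (\<nu> x) (mId C (A x x))) (e x x)) = j x)
   \<and> (\<forall>x\<in>X. mComp C (mRu C (A x x)) (mComp C (mTens C (mId C (A x x)) (\<nu> x)) (e x x)) = j x)"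

definition left_integral_cond :: "('o, 'm) moncat \<Rightarrow> 'x set \<Rightarrow> ('x \<Rightarrow> 'x \<Rightarrow> 'o)
    \<Rightarrow> ('x \<Rightarrow> 'x \<Rightarrow> 'x \<Rightarrow> 'm) \<Rightarrow> ('x \<Rightarrow> 'x \<Rightarrow> 'm) \<Rightarrow> 'x \<Rightarrow> 'o \<Rightarrow> ('x \<Rightarrow> 'm) \<Rightarrow> bool" where
  "left_integral_cond C X A m \<epsilon> z W w \<longleftrightarrow>
     (\<forall>y\<in>X. hom C (w y) W (A y z))
   \<and> (\<forall>x\<in>X. \<forall>y\<in>X.
        mComp C (m x y z) (mTens C (mId C (A x y)) (w y))
        = mComp C (mLu C (A x z)) (mTens C (\<epsilon> x y) (w x)))"

definition left_integral_space :: "('o, 'm) moncat \<Rightarrow> 'x set \<Rightarrow> ('x \<Rightarrow> 'x \<Rightarrow> 'o)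
    \<Rightarrow> ('x \<Rightarrow> 'x \<Rightarrow> 'x \<Rightarrow> 'm) \<Rightarrow> ('x \<Rightarrow> 'x \<Rightarrow> 'm) \<Rightarrow> 'x \<Rightarrow> 'o \<Rightarrow> ('x \<Rightarrow> 'm) \<Rightarrow> bool" where
  "left_integral_space C X A m \<epsilon> z Intg \<tau> \<longleftrightarrow>
     left_integral_cond C X A m \<epsilon> z Intg \<tau>
   \<and> (\<forall>W w. left_integral_cond C X A m \<epsilon> z W w \<longrightarrow>
        (\<exists>!h. hom C h W Intg \<and> (\<forall>y\<in>X. mComp C (\<tau> y) h = w y)))"

end

theory Submission
  imports Defs
begin


locale MC =
  fixes C :: "('o, 'm) moncat"
  assumes mc: "monoidal_category C"
begin

abbreviation "Arr \<equiv> mArr C"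
abbreviation "Dom \<equiv> mDom C"
abbreviation "Cod \<equiv> mCod C"
abbreviation Cp (infixr "\<cdot>" 55) where "g \<cdot> f \<equiv> mComp C g f"
abbreviation Tn (infixr "\<otimes>" 65) where "f \<otimes> g \<equiv> mTens C f g"
abbreviation "Idm \<equiv> mId C"
abbreviation "TO \<equiv> mTensO C"
abbreviation "U \<equiv> mUnit C"
abbreviation "As \<equiv> mAssoc C"
abbreviation "Lu \<equiv> mLu C"
abbreviation "Ru \<equiv> mRu C"
abbreviation "Ai a b c \<equiv> mInv C (mAssoc C a b c)"
abbreviation "Lui a \<equiv> mInv C (mLu C a)"
abbreviation "Rui a \<equiv> mInv C (mRu C a)"

lemma cat: "category C" using mc unfolding monoidal_category_def by blast

lemma Id_ty[simp]: "Arr (Idm a)" "Dom (Idm a) = a" "Cod (Idm a) = a"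
  using cat unfolding category_def hom_def by auto

lemma comp_ty[simp]:
  assumes "Arr f" "Arr g" "Dom g = Cod f"
  shows "Arr (g \<cdot> f)" "Dom (g \<cdot> f) = Dom f" "Cod (g \<cdot> f) = Cod g"
  using cat assms unfolding category_def hom_def by auto

lemma id_left[simp]: "Arr f \<Longrightarrow> Cod f = a \<Longrightarrow> Idm a \<cdot> f = f"
  using cat unfolding category_def by auto
lemma id_right[simp]: "Arr f \<Longrightarrow> Dom f = a \<Longrightarrow> f \<cdot> Idm a = f"
  using cat unfolding category_def by auto

lemma assoc[simp]:
  "Arr f \<Longrightarrow> Arr g \<Longrightarrow> Arr h \<Longrightarrow> Dom g = Cod f \<Longrightarrow> Dom h = Cod g \<Longrightarrow>
   (h \<cdot> g) \<cdot> f = h \<cdot> (g \<cdot> f)"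
  using cat unfolding category_def by metis

lemma tens_ty[simp]:
  assumes "Arr f" "Arr g"
  shows "Arr (f \<otimes> g)" "Dom (f \<otimes> g) = TO (Dom f) (Dom g)" "Cod (f \<otimes> g) = TO (Cod f) (Cod g)"
  using mc assms unfolding monoidal_category_def hom_def by auto

lemma tens_id[simp]: "Idm a \<otimes> Idm b = Idm (TO a b)"
  using mc unfolding monoidal_category_def by auto

lemma interchange:
  "Arr f \<Longrightarrow> Arr g \<Longrightarrow> Arr h \<Longrightarrow> Arr k \<Longrightarrow> Cod f = Dom g \<Longrightarrow> Cod h = Dom k
   \<Longrightarrow> (g \<cdot> f) \<otimes> (k \<cdot> h) = (g \<otimes> k) \<cdot> (f \<otimes> h)"
  using mc unfolding monoidal_category_def by auto

lemma inv_pair: "is_iso C f \<Longrightarrow> inverse_pair C f (mInv C f)"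
  unfolding is_iso_def mInv_def by (rule someI_ex)

lemma As_ty[simp]: "Arr (As a b c)" "Dom (As a b c) = TO (TO a b) c" "Cod (As a b c) = TO a (TO b c)"
  using mc unfolding monoidal_category_def hom_def by auto
lemma Lu_ty[simp]: "Arr (Lu a)" "Dom (Lu a) = TO U a" "Cod (Lu a) = a"
  using mc unfolding monoidal_category_def hom_def by auto
lemma Ru_ty[simp]: "Arr (Ru a)" "Dom (Ru a) = TO a U" "Cod (Ru a) = a"
  using mc unfolding monoidal_category_def hom_def by auto

lemma As_iso: "inverse_pair C (As a b c) (Ai a b c)"
  using mc inv_pair unfolding monoidal_category_def by auto
lemma Lu_iso: "inverse_pair C (Lu a) (Lui a)"
  using mc inv_pair unfolding monoidal_category_def by auto
lemma Ru_iso: "inverse_pair C (Ru a) (Rui a)"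
  using mc inv_pair unfolding monoidal_category_def by auto

lemma Ai_ty[simp]: "Arr (Ai a b c)" "Dom (Ai a b c) = TO a (TO b c)" "Cod (Ai a b c) = TO (TO a b) c"
  using As_iso[of a b c] unfolding inverse_pair_def hom_def by auto
lemma Lui_ty[simp]: "Arr (Lui a)" "Dom (Lui a) = a" "Cod (Lui a) = TO U a"
  using Lu_iso[of a] unfolding inverse_pair_def hom_def by auto
lemma Rui_ty[simp]: "Arr (Rui a)" "Dom (Rui a) = a" "Cod (Rui a) = TO a U"
  using Ru_iso[of a] unfolding inverse_pair_def hom_def by auto

lemma As_inv[simp]: "Ai a b c \<cdot> As a b c = Idm (TO (TO a b) c)" "As a b c \<cdot> Ai a b c = Idm (TO a (TO b c))"
  using As_iso[of a b c] unfolding inverse_pair_def by auto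
lemma Lu_inv[simp]: "Lui a \<cdot> Lu a = Idm (TO U a)" "Lu a \<cdot> Lui a = Idm a"
  using Lu_iso[of a] unfolding inverse_pair_def by auto
lemma Ru_inv[simp]: "Rui a \<cdot> Ru a = Idm (TO a U)" "Ru a \<cdot> Rui a = Idm a"
  using Ru_iso[of a] unfolding inverse_pair_def by auto

lemma As_inv'[simp]:
  "Arr X \<Longrightarrow> Cod X = TO (TO a b) c \<Longrightarrow> Ai a b c \<cdot> As a b c \<cdot> X = X"
  "Arr X \<Longrightarrow> Cod X = TO a (TO b c) \<Longrightarrow> As a b c \<cdot> Ai a b c \<cdot> X = X"
  by (simp_all flip: assoc)
lemma Lu_inv'[simp]:
  "Arr X \<Longrightarrow> Cod X = TO U a \<Longrightarrow> Lui a \<cdot> Lu a \<cdot> X = X"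
  "Arr X \<Longrightarrow> Cod X = a \<Longrightarrow> Lu a \<cdot> Lui a \<cdot> X = X"
  by (simp_all flip: assoc)
lemma Ru_inv'[simp]:
  "Arr X \<Longrightarrow> Cod X = TO a U \<Longrightarrow> Rui a \<cdot> Ru a \<cdot> X = X"
  "Arr X \<Longrightarrow> Cod X = a \<Longrightarrow> Ru a \<cdot> Rui a \<cdot> X = X"
  by (simp_all flip: assoc)

lemma As_nat:
  "Arr f \<Longrightarrow> Arr g \<Longrightarrow> Arr h \<Longrightarrow>
   As (Cod f) (Cod g) (Cod h) \<cdot> ((f \<otimes> g) \<otimes> h) = (f \<otimes> (g \<otimes> h)) \<cdot> As (Dom f) (Dom g) (Dom h)"
  using mc unfolding monoidal_category_def by auto
lemma Lu_nat:
  "Arr f \<Longrightarrow> Lu (Cod f) \<cdot> (Idm U \<otimes> f) = f \<cdot> Lu (Dom f)"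
  using mc unfolding monoidal_category_def by auto
lemma Ru_nat:
  "Arr f \<Longrightarrow> Ru (Cod f) \<cdot> (f \<otimes> Idm U) = f \<cdot> Ru (Dom f)"
  using mc unfolding monoidal_category_def by auto
lemma pentagon:
  "As a b (TO c d) \<cdot> As (TO a b) c d = (Idm a \<otimes> As b c d) \<cdot> As a (TO b c) d \<cdot> (As a b c \<otimes> Idm d)"
  using mc unfolding monoidal_category_def by auto
lemma triangle:
  "(Idm a \<otimes> Lu b) \<cdot> As a U b = Ru a \<otimes> Idm b"
  using mc unfolding monoidal_category_def by auto


lemma suff: "g \<cdot> f = r \<Longrightarrow> Arr X \<Longrightarrow> Cod X = Dom f \<Longrightarrow> Arr f \<Longrightarrow> Arr g \<Longrightarrow> Dom g = Cod f
  \<Longrightarrow> g \<cdot> f \<cdot> X = r \<cdot> X"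
  by (metis assoc)

lemma Ru_mono: assumes a: "Arr h1" "Arr h2" "Cod h1 = TO a U" "Cod h2 = TO a U" "Ru a \<cdot> h1 = Ru a \<cdot> h2"
  shows "h1 = h2"
proof -
  have "h1 = Rui a \<cdot> Ru a \<cdot> h1" using a(1,3) by simp
  also have "\<dots> = Rui a \<cdot> Ru a \<cdot> h2" using a(5) by simp
  also have "\<dots> = h2" using a(2,4) by simp
  finally show ?thesis .
qed
lemma Ru_epi: assumes a: "Arr h1" "Arr h2" "Dom h1 = a" "Dom h2 = a" "h1 \<cdot> Ru a = h2 \<cdot> Ru a"
  shows "h1 = h2"
proof -
  have "h1 = (h1 \<cdot> Ru a) \<cdot> Rui a" using a(1,3) by simp
  also have "\<dots> = (h2 \<cdot> Ru a) \<cdot> Rui a" using a(5) by simp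
  also have "\<dots> = h2" using a(2,4) by simp
  finally show ?thesis .
qed
lemma Lu_mono: assumes a: "Arr h1" "Arr h2" "Cod h1 = TO U a" "Cod h2 = TO U a" "Lu a \<cdot> h1 = Lu a \<cdot> h2"
  shows "h1 = h2"
proof -
  have "h1 = Lui a \<cdot> Lu a \<cdot> h1" using a(1,3) by simp
  also have "\<dots> = Lui a \<cdot> Lu a \<cdot> h2" using a(5) by simp
  also have "\<dots> = h2" using a(2,4) by simp
  finally show ?thesis .
qed
lemma Lu_epi: assumes a: "Arr h1" "Arr h2" "Dom h1 = a" "Dom h2 = a" "h1 \<cdot> Lu a = h2 \<cdot> Lu a"
  shows "h1 = h2"
proof -
  have "h1 = (h1 \<cdot> Lu a) \<cdot> Lui a" using a(1,3) by simp
  also have "\<dots> = (h2 \<cdot> Lu a) \<cdot> Lui a" using a(5) by simp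
  also have "\<dots> = h2" using a(2,4) by simp
  finally show ?thesis .
qed
lemma As_mono: assumes a: "Arr h1" "Arr h2" "Cod h1 = TO (TO a b) c" "Cod h2 = TO (TO a b) c" "As a b c \<cdot> h1 = As a b c \<cdot> h2"
  shows "h1 = h2"
proof -
  have "h1 = Ai a b c \<cdot> As a b c \<cdot> h1" using a(1,3) by simp
  also have "\<dots> = Ai a b c \<cdot> As a b c \<cdot> h2" using a(5) by simp
  also have "\<dots> = h2" using a(2,4) by simp
  finally show ?thesis .
qed

lemma As_epi: assumes a: "Arr h1" "Arr h2" "Dom h1 = TO x (TO y z)" "Dom h2 = TO x (TO y z)" "h1 \<cdot> As x y z = h2 \<cdot> As x y z"
  shows "h1 = h2"
proof -
  have "h1 = (h1 \<cdot> As x y z) \<cdot> Ai x y z" using a(1,3) by simp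
  also have "\<dots> = (h2 \<cdot> As x y z) \<cdot> Ai x y z" using a(5) by simp
  also have "\<dots> = h2" using a(2,4) by simp
  finally show ?thesis .
qed

lemma cancel_tU: assumes a: "Arr f" "Arr g" "Dom f = Dom g" "Cod f = Cod g" "f \<otimes> Idm U = g \<otimes> Idm U" shows "f = g"
proof -
  have "f \<cdot> Ru (Dom f) = g \<cdot> Ru (Dom f)"
    using Ru_nat[of f] Ru_nat[of g] a by simp
  thus ?thesis using a by (intro Ru_epi[of f g "Dom f"]) auto
qed
lemma cancel_Ut: assumes a: "Arr f" "Arr g" "Dom f = Dom g" "Cod f = Cod g" "Idm U \<otimes> f = Idm U \<otimes> g" shows "f = g"
proof -
  have "f \<cdot> Lu (Dom f) = g \<cdot> Lu (Dom f)"
    using Lu_nat[of f] Lu_nat[of g] a by simp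
  thus ?thesis using a by (intro Lu_epi[of f g "Dom f"]) auto
qed


lemma tens_split1: "Arr f \<Longrightarrow> Arr g \<Longrightarrow> f \<otimes> g = (f \<otimes> Idm (Cod g)) \<cdot> (Idm (Dom f) \<otimes> g)"
  using interchange[of "Idm (Dom f)" f g "Idm (Cod g)"] by simp
lemma tens_split2: "Arr f \<Longrightarrow> Arr g \<Longrightarrow> f \<otimes> g = (Idm (Cod f) \<otimes> g) \<cdot> (f \<otimes> Idm (Dom g))"
  using interchange[of f "Idm (Cod f)" "Idm (Dom g)" g] by simp
lemma merge1: assumes "Arr f" "Arr g" "Dom f = a" "Cod g = b" shows "(f \<otimes> Idm b) \<cdot> (Idm a \<otimes> g) = f \<otimes> g"
  using assms tens_split1[of f g] by simp
lemma merge2: assumes "Arr f" "Arr g" "Cod f = b" "Dom g = a" shows "(Idm b \<otimes> g) \<cdot> (f \<otimes> Idm a) = f \<otimes> g"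
  using assms tens_split2[of f g] by simp
lemma merge1': assumes "Arr f" "Arr g" "Dom f = a" "Cod g = b" "Arr X" "Cod X = TO a (Dom g)"
  shows "(f \<otimes> Idm b) \<cdot> (Idm a \<otimes> g) \<cdot> X = (f \<otimes> g) \<cdot> X"
  by (rule suff[OF merge1]) (use assms in simp_all)
lemma merge2': assumes "Arr f" "Arr g" "Cod f = b" "Dom g = a" "Arr X" "Cod X = TO (Dom f) a"
  shows "(Idm b \<otimes> g) \<cdot> (f \<otimes> Idm a) \<cdot> X = (f \<otimes> g) \<cdot> X"
  by (rule suff[OF merge2]) (use assms in simp_all)
end

context MC begin
lemma L5: "(Idm b \<otimes> Ru a) \<cdot> As b a U = Ru (TO b a)"
proof -
  have "As b a U \<cdot> (Ru (TO b a) \<otimes> Idm U) = As b a U \<cdot> (Idm (TO b a) \<otimes> Lu U) \<cdot> As (TO b a) U U"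
    by (simp add: triangle)
  also have "\<dots> = (Idm b \<otimes> (Idm a \<otimes> Lu U)) \<cdot> As b a (TO U U) \<cdot> As (TO b a) U U"
    using suff[OF As_nat[of "Idm b" "Idm a" "Lu U"], of "As (TO b a) U U"] by simp
  also have "\<dots> = (Idm b \<otimes> (Idm a \<otimes> Lu U)) \<cdot> (Idm b \<otimes> As a U U) \<cdot> As b (TO a U) U \<cdot> (As b a U \<otimes> Idm U)"
    by (simp add: pentagon)
  also have "\<dots> = (Idm b \<otimes> (Ru a \<otimes> Idm U)) \<cdot> As b (TO a U) U \<cdot> (As b a U \<otimes> Idm U)"
    using suff[OF interchange[of "Idm b" "Idm b" "As a U U" "Idm a \<otimes> Lu U", symmetric]]
    by (simp add: triangle)
  also have "\<dots> = As b a U \<cdot> ((Idm b \<otimes> Ru a) \<otimes> Idm U) \<cdot> (As b a U \<otimes> Idm U)"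
    using suff[OF As_nat[of "Idm b" "Ru a" "Idm U", symmetric]] by simp
  also have "\<dots> = As b a U \<cdot> (((Idm b \<otimes> Ru a) \<cdot> As b a U) \<otimes> Idm U)"
    using interchange[of "As b a U" "Idm b \<otimes> Ru a" "Idm U" "Idm U"] by simp
  finally have "Ru (TO b a) \<otimes> Idm U = ((Idm b \<otimes> Ru a) \<cdot> As b a U) \<otimes> Idm U"
    by (rule As_mono[rotated 4]) simp_all
  thus ?thesis by (rule cancel_tU[symmetric, rotated 4]) simp_all
qed

lemma RuUU: "Ru (TO a U) = Ru a \<otimes> Idm U"
proof (rule Ru_mono[of _ _ a, rotated 4])
  show "Ru a \<cdot> Ru (TO a U) = Ru a \<cdot> (Ru a \<otimes> Idm U)" using Ru_nat[of "Ru a"] by simp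
qed simp_all

lemma L4: "Lu U = Ru U"
proof -
  have "(Idm U \<otimes> Ru U) \<cdot> As U U U = (Idm U \<otimes> Lu U) \<cdot> As U U U"
    by (simp add: L5 RuUU triangle)
  hence "Idm U \<otimes> Ru U = Idm U \<otimes> Lu U"
    by (rule As_epi[rotated 4]) simp_all
  thus ?thesis by (rule cancel_Ut[symmetric, rotated 4]) simp_all
qed
end

context MC begin
lemma part2a:
  assumes ty: "Arr \<nu>" "Dom \<nu> = a" "Cod \<nu> = U" "Arr e" "Dom e = U" "Cod e = TO a a"
     "Arr \<epsilon>" "Dom \<epsilon> = a" "Cod \<epsilon> = U"
   and fr: "Lu a \<cdot> (\<nu> \<otimes> Idm a) \<cdot> e = j" and cu: "\<epsilon> \<cdot> j = Idm U"
  shows "\<nu> \<cdot> Ru a \<cdot> (Idm a \<otimes> \<epsilon>) \<cdot> e = Idm U"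
proof -
  have "\<nu> \<cdot> Ru a \<cdot> (Idm a \<otimes> \<epsilon>) \<cdot> e = Ru U \<cdot> (\<nu> \<otimes> Idm U) \<cdot> (Idm a \<otimes> \<epsilon>) \<cdot> e"
    using suff[OF Ru_nat[of \<nu>, symmetric], of "(Idm a \<otimes> \<epsilon>) \<cdot> e"] ty by simp
  also have "\<dots> = Ru U \<cdot> (\<nu> \<otimes> \<epsilon>) \<cdot> e"
    using ty by (simp add: merge1')
  also have "\<dots> = Lu U \<cdot> (Idm U \<otimes> \<epsilon>) \<cdot> (\<nu> \<otimes> Idm a) \<cdot> e"
    using ty by (simp add: merge2' L4)
  also have "\<dots> = \<epsilon> \<cdot> Lu a \<cdot> (\<nu> \<otimes> Idm a) \<cdot> e"
    using suff[OF Lu_nat[of \<epsilon>], of "(\<nu> \<otimes> Idm a) \<cdot> e"] ty by simp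
  also have "\<dots> = Idm U" using fr cu by simp
  finally show ?thesis .
qed
end

context MC begin

lemma idl_comp[simp]: "Arr f \<Longrightarrow> Arr g \<Longrightarrow> Dom f = Cod g \<Longrightarrow> (Idm a \<otimes> f) \<cdot> (Idm a \<otimes> g) = Idm a \<otimes> (f \<cdot> g)"
  using interchange[of "Idm a" "Idm a" g f] by simp
lemma idr_comp[simp]: "Arr f \<Longrightarrow> Arr g \<Longrightarrow> Dom f = Cod g \<Longrightarrow> (f \<otimes> Idm a) \<cdot> (g \<otimes> Idm a) = (f \<cdot> g) \<otimes> Idm a"
  using interchange[of g f "Idm a" "Idm a"] by simp
lemma idl_comp'[simp]: "Arr f \<Longrightarrow> Arr g \<Longrightarrow> Dom f = Cod g \<Longrightarrow> Arr X \<Longrightarrow> Cod X = TO a (Dom g) \<Longrightarrow>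
   (Idm a \<otimes> f) \<cdot> (Idm a \<otimes> g) \<cdot> X = (Idm a \<otimes> (f \<cdot> g)) \<cdot> X"
  by (rule suff[OF idl_comp]) simp_all
lemma idr_comp'[simp]: "Arr f \<Longrightarrow> Arr g \<Longrightarrow> Dom f = Cod g \<Longrightarrow> Arr X \<Longrightarrow> Cod X = TO (Dom g) a \<Longrightarrow>
   (f \<otimes> Idm a) \<cdot> (g \<otimes> Idm a) \<cdot> X = ((f \<cdot> g) \<otimes> Idm a) \<cdot> X"
  by (rule suff[OF idr_comp]) simp_all

lemma Ai_nat: assumes "Arr f" "Arr g" "Arr h"
  shows "((f \<otimes> g) \<otimes> h) \<cdot> Ai (Dom f) (Dom g) (Dom h) = Ai (Cod f) (Cod g) (Cod h) \<cdot> (f \<otimes> (g \<otimes> h))"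
proof (rule As_mono[of _ _ "Cod f" "Cod g" "Cod h", rotated 4])
  have "As (Cod f) (Cod g) (Cod h) \<cdot> ((f \<otimes> g) \<otimes> h) \<cdot> Ai (Dom f) (Dom g) (Dom h)
     = (f \<otimes> (g \<otimes> h)) \<cdot> As (Dom f) (Dom g) (Dom h) \<cdot> Ai (Dom f) (Dom g) (Dom h)"
    using suff[OF As_nat[OF assms], of "Ai (Dom f) (Dom g) (Dom h)"] assms by simp
  thus "As (Cod f) (Cod g) (Cod h) \<cdot> ((f \<otimes> g) \<otimes> h) \<cdot> Ai (Dom f) (Dom g) (Dom h)
     = As (Cod f) (Cod g) (Cod h) \<cdot> Ai (Cod f) (Cod g) (Cod h) \<cdot> (f \<otimes> (g \<otimes> h))"
    using assms by simp
qed (use assms in simp_all)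

lemma Lui_nat: assumes "Arr f" shows "Lui (Cod f) \<cdot> f = (Idm U \<otimes> f) \<cdot> Lui (Dom f)"
proof (rule Lu_mono[of _ _ "Cod f", rotated 4])
  show "Lu (Cod f) \<cdot> Lui (Cod f) \<cdot> f = Lu (Cod f) \<cdot> (Idm U \<otimes> f) \<cdot> Lui (Dom f)"
    using suff[OF Lu_nat[OF assms], of "Lui (Dom f)"] assms by simp
qed (use assms in simp_all)

lemma L5': "Ru (TO b a) \<cdot> Ai b a U = Idm b \<otimes> Ru a"
  by (rule As_epi[of _ _ b a U, rotated 4]) (simp_all flip: L5)

lemma GA:
  assumes ty: "Arr m1" "Dom m1 = TO r b" "Cod m1 = p" "Arr f" "Dom f = c" "Cod f = U"
    "Arr e" "Dom e = U" "Cod e = TO b c"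
  shows "Ru p \<cdot> (Idm p \<otimes> f) \<cdot> (m1 \<otimes> Idm c) \<cdot> Ai r b c \<cdot> (Idm r \<otimes> e) \<cdot> Rui r
    = m1 \<cdot> (Idm r \<otimes> (Ru b \<cdot> (Idm b \<otimes> f) \<cdot> e)) \<cdot> Rui r"
proof -
  have "Ru p \<cdot> (Idm p \<otimes> f) \<cdot> (m1 \<otimes> Idm c) \<cdot> Ai r b c \<cdot> (Idm r \<otimes> e) \<cdot> Rui r
     = Ru p \<cdot> (m1 \<otimes> Idm U) \<cdot> (Idm (TO r b) \<otimes> f) \<cdot> Ai r b c \<cdot> (Idm r \<otimes> e) \<cdot> Rui r"
    using ty by (simp add: merge2' merge1')
  also have "\<dots> = m1 \<cdot> Ru (TO r b) \<cdot> (Idm (TO r b) \<otimes> f) \<cdot> Ai r b c \<cdot> (Idm r \<otimes> e) \<cdot> Rui r"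
    using suff[OF Ru_nat[of m1], of "(Idm (TO r b) \<otimes> f) \<cdot> Ai r b c \<cdot> (Idm r \<otimes> e) \<cdot> Rui r"] ty by simp
  also have "\<dots> = m1 \<cdot> Ru (TO r b) \<cdot> Ai r b U \<cdot> (Idm r \<otimes> (Idm b \<otimes> f)) \<cdot> (Idm r \<otimes> e) \<cdot> Rui r"
    using suff[OF Ai_nat[of "Idm r" "Idm b" f], of "(Idm r \<otimes> e) \<cdot> Rui r"] ty by simp
  also have "\<dots> = m1 \<cdot> (Idm r \<otimes> Ru b) \<cdot> (Idm r \<otimes> (Idm b \<otimes> f)) \<cdot> (Idm r \<otimes> e) \<cdot> Rui r"
    using suff[OF L5'[of r b], of "(Idm r \<otimes> (Idm b \<otimes> f)) \<cdot> (Idm r \<otimes> e) \<cdot> Rui r"] ty by simp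
  also have "\<dots> = m1 \<cdot> (Idm r \<otimes> (Ru b \<cdot> (Idm b \<otimes> f) \<cdot> e)) \<cdot> Rui r"
    using ty by simp
  finally show ?thesis .
qed

lemma GB:
  assumes ty: "Arr e" "Dom e = U" "Cod e = TO p q" "Arr g" "Dom g = q" "Cod g = U"
    "Arr h" "Dom h = T" "Cod h = U"
  shows "Ru p \<cdot> (Idm p \<otimes> (Lu U \<cdot> (g \<otimes> h))) \<cdot> As p q T \<cdot> (e \<otimes> Idm T) \<cdot> Lui T
    = Ru p \<cdot> (Idm p \<otimes> g) \<cdot> e \<cdot> h"
proof -
  have 1: "Lu U \<cdot> (g \<otimes> h) = g \<cdot> Ru q \<cdot> (Idm q \<otimes> h)"
    using suff[OF Ru_nat[of g], of "Idm q \<otimes> h"] ty by (simp add: L4 merge1)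
  have "Ru p \<cdot> (Idm p \<otimes> (Lu U \<cdot> (g \<otimes> h))) \<cdot> As p q T \<cdot> (e \<otimes> Idm T) \<cdot> Lui T
    = Ru p \<cdot> (Idm p \<otimes> g) \<cdot> (Idm p \<otimes> Ru q) \<cdot> (Idm p \<otimes> (Idm q \<otimes> h)) \<cdot> As p q T \<cdot> (e \<otimes> Idm T) \<cdot> Lui T"
    using ty by (simp add: 1)
  also have "\<dots> = Ru p \<cdot> (Idm p \<otimes> g) \<cdot> (Idm p \<otimes> Ru q) \<cdot> As p q U \<cdot> (Idm (TO p q) \<otimes> h) \<cdot> (e \<otimes> Idm T) \<cdot> Lui T"
    using suff[OF As_nat[of "Idm p" "Idm q" h, symmetric], of "(e \<otimes> Idm T) \<cdot> Lui T"] ty by simp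
  also have "\<dots> = Ru p \<cdot> (Idm p \<otimes> g) \<cdot> Ru (TO p q) \<cdot> (e \<otimes> Idm U) \<cdot> (Idm U \<otimes> h) \<cdot> Lui T"
    using suff[OF L5[of p q], of "(Idm (TO p q) \<otimes> h) \<cdot> (e \<otimes> Idm T) \<cdot> Lui T"] ty
    by (simp add: merge2' merge1')
  also have "\<dots> = Ru p \<cdot> (Idm p \<otimes> g) \<cdot> e \<cdot> Lu U \<cdot> (Idm U \<otimes> h) \<cdot> Lui T"
    using suff[OF Ru_nat[of e], of "(Idm U \<otimes> h) \<cdot> Lui T"] ty by (simp add: L4)
  also have "\<dots> = Ru p \<cdot> (Idm p \<otimes> g) \<cdot> e \<cdot> h \<cdot> Lu T \<cdot> Lui T"
    using suff[OF Lu_nat[of h], of "Lui T"] ty by simp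
  also have "\<dots> = Ru p \<cdot> (Idm p \<otimes> g) \<cdot> e \<cdot> h" using ty by simp
  finally show ?thesis .
qed

end

context MC begin

lemma main:
  assumes SH: "semi_hopf_vcategory C X A m j \<delta> \<epsilon>"
    and FR: "frobenius_system C X A m j e \<nu>"
    and LI: "\<forall>z\<in>X. left_integral_space C X A m \<epsilon> z (Intg z) (\<lambda>y. \<tau> y z)"
  shows "\<forall>x\<in>X.
     (\<exists>u. hom C u (mUnit C) (Intg x)
          \<and> (\<forall>y\<in>X. mComp C (\<tau> y x) u
                    = mComp C (mRu C (A y x)) (mComp C (mTens C (mId C (A y x)) (\<epsilon> x y)) (e y x))))
   \<and> (\<forall>u. hom C u (mUnit C) (Intg x)
          \<and> (\<forall>y\<in>X. mComp C (\<tau> y x) u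
                    = mComp C (mRu C (A y x)) (mComp C (mTens C (mId C (A y x)) (\<epsilon> x y)) (e y x)))
        \<longrightarrow> mComp C (mComp C (\<nu> x) (\<tau> x x)) u = mId C (mUnit C)
          \<and> mComp C u (mComp C (\<nu> x) (\<tau> x x)) = mId C (Intg x))"
proof (intro ballI)
  fix x assume xX: "x \<in> X"
  have VC: "vcategory C X A m j" using SH unfolding semi_hopf_vcategory_def by blast
  have m_ty[simp]: "Arr (m a b c)" "Dom (m a b c) = TO (A a b) (A b c)" "Cod (m a b c) = A a c"
    if "a \<in> X" "b \<in> X" "c \<in> X" for a b c
    using VC that unfolding vcategory_def hom_def by auto
  have j_ty[simp]: "Arr (j a)" "Dom (j a) = U" "Cod (j a) = A a a" if "a \<in> X" for a
    using VC that unfolding vcategory_def hom_def by auto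
  have m_ru: "m a b b \<cdot> (Idm (A a b) \<otimes> j b) = Ru (A a b)" if "a \<in> X" "b \<in> X" for a b
    using VC that unfolding vcategory_def by auto
  have eps_ty[simp]: "Arr (\<epsilon> a b)" "Dom (\<epsilon> a b) = A a b" "Cod (\<epsilon> a b) = U" if "a \<in> X" "b \<in> X" for a b
    using SH that unfolding semi_hopf_vcategory_def comonoid_def hom_def by auto
  have eps_m: "\<epsilon> a c \<cdot> m a b c = Lu U \<cdot> (\<epsilon> a b \<otimes> \<epsilon> b c)" if "a \<in> X" "b \<in> X" "c \<in> X" for a b c
    using SH that unfolding semi_hopf_vcategory_def comonoid_hom_def tens_counit_def by auto
  have eps_j: "\<epsilon> a a \<cdot> j a = Idm U" if "a \<in> X" for a
    using SH that unfolding semi_hopf_vcategory_def comonoid_hom_def by auto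
  have CF: "casimir_family C X A m e" using FR unfolding frobenius_system_def by blast
  have e_ty[simp]: "Arr (e a b)" "Dom (e a b) = U" "Cod (e a b) = TO (A a b) (A b a)" if "a \<in> X" "b \<in> X" for a b
    using CF that unfolding casimir_family_def hom_def by auto
  have cas: "(m z x' y \<otimes> Idm (A y x')) \<cdot> Ai (A z x') (A x' y) (A y x') \<cdot> (Idm (A z x') \<otimes> e x' y) \<cdot> Rui (A z x')
     = (Idm (A z y) \<otimes> m y z x') \<cdot> As (A z y) (A y z) (A z x') \<cdot> (e z y \<otimes> Idm (A z x')) \<cdot> Lui (A z x')"
    if "x' \<in> X" "y \<in> X" "z \<in> X" for x' y z
    using CF that unfolding casimir_family_def by auto
  have nu_ty[simp]: "Arr (\<nu> a)" "Dom (\<nu> a) = A a a" "Cod (\<nu> a) = U" if "a \<in> X" for a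
    using FR that unfolding frobenius_system_def hom_def by auto
  have fr1: "Lu (A a a) \<cdot> (\<nu> a \<otimes> Idm (A a a)) \<cdot> e a a = j a" if "a \<in> X" for a
    using FR that unfolding frobenius_system_def by auto
  have fr2: "Ru (A a a) \<cdot> (Idm (A a a) \<otimes> \<nu> a) \<cdot> e a a = j a" if "a \<in> X" for a
    using FR that unfolding frobenius_system_def by auto
  have LIx: "left_integral_space C X A m \<epsilon> x (Intg x) (\<lambda>y. \<tau> y x)" using LI xX by blast
  have tau_ty[simp]: "Arr (\<tau> y x)" "Dom (\<tau> y x) = Intg x" "Cod (\<tau> y x) = A y x" if "y \<in> X" for y
    using LIx that unfolding left_integral_space_def left_integral_cond_def hom_def by auto
  have tau_int: "m w y x \<cdot> (Idm (A w y) \<otimes> \<tau> y x) = Lu (A w x) \<cdot> (\<epsilon> w y \<otimes> \<tau> w x)"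
    if "w \<in> X" "y \<in> X" for w y
    using LIx that unfolding left_integral_space_def left_integral_cond_def by auto
  have univ: "\<And>W w. left_integral_cond C X A m \<epsilon> x W w \<Longrightarrow>
        (\<exists>!h. hom C h W (Intg x) \<and> (\<forall>y\<in>X. \<tau> y x \<cdot> h = w y))"
    using LIx unfolding left_integral_space_def by auto

  define t where "t y = Ru (A y x) \<cdot> (Idm (A y x) \<otimes> \<epsilon> x y) \<cdot> e y x" for y
  have t_ty[simp]: "Arr (t y)" "Dom (t y) = U" "Cod (t y) = A y x" if "y \<in> X" for y
    using that xX unfolding t_def by auto

  have tcond: "left_integral_cond C X A m \<epsilon> x U t"
    unfolding left_integral_cond_def
  proof (intro conjI ballI)
    fix y assume "y \<in> X" thus "hom C (t y) U (A y x)" unfolding hom_def by simp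
  next
    fix w y assume wX: "w \<in> X" and yX: "y \<in> X"
    note ctx = wX yX xX
    have "m w y x \<cdot> (Idm (A w y) \<otimes> t y) \<cdot> Rui (A w y)
        = Ru (A w x) \<cdot> (Idm (A w x) \<otimes> \<epsilon> x y) \<cdot> (m w y x \<otimes> Idm (A x y)) \<cdot> Ai (A w y) (A y x) (A x y)
            \<cdot> (Idm (A w y) \<otimes> e y x) \<cdot> Rui (A w y)"
      unfolding t_def using ctx by (subst GA) simp_all
    also have "\<dots> = Ru (A w x) \<cdot> (Idm (A w x) \<otimes> \<epsilon> x y) \<cdot> (Idm (A w x) \<otimes> m x w y) \<cdot> As (A w x) (A x w) (A w y)
       \<cdot> (e w x \<otimes> Idm (A w y)) \<cdot> Lui (A w y)"
      using ctx by (simp only: cas)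
    also have "\<dots> = Ru (A w x) \<cdot> (Idm (A w x) \<otimes> (Lu U \<cdot> (\<epsilon> x w \<otimes> \<epsilon> w y))) \<cdot> As (A w x) (A x w) (A w y)
       \<cdot> (e w x \<otimes> Idm (A w y)) \<cdot> Lui (A w y)"
      using ctx by (simp add: eps_m)
    also have "\<dots> = t w \<cdot> \<epsilon> w y"
      unfolding t_def using ctx by (subst GB) simp_all
    finally have 1: "m w y x \<cdot> (Idm (A w y) \<otimes> t y) \<cdot> Rui (A w y) = t w \<cdot> \<epsilon> w y" .
    have "m w y x \<cdot> (Idm (A w y) \<otimes> t y) = (m w y x \<cdot> (Idm (A w y) \<otimes> t y) \<cdot> Rui (A w y)) \<cdot> Ru (A w y)"
      using ctx by simp
    also have "\<dots> = t w \<cdot> \<epsilon> w y \<cdot> Ru (A w y)" using 1 ctx by simp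
    also have "\<dots> = t w \<cdot> Ru U \<cdot> (\<epsilon> w y \<otimes> Idm U)"
      using ctx Ru_nat[of "\<epsilon> w y"] by simp
    also have "\<dots> = t w \<cdot> Lu U \<cdot> (\<epsilon> w y \<otimes> Idm U)" by (simp add: L4)
    also have "\<dots> = Lu (A w x) \<cdot> (Idm U \<otimes> t w) \<cdot> (\<epsilon> w y \<otimes> Idm U)"
      using ctx suff[OF Lu_nat[of "t w"], of "\<epsilon> w y \<otimes> Idm U"] by simp
    also have "\<dots> = Lu (A w x) \<cdot> (\<epsilon> w y \<otimes> t w)"
      using ctx by (simp add: merge2)
    finally show "m w y x \<cdot> (Idm (A w y) \<otimes> t y) = Lu (A w x) \<cdot> (\<epsilon> w y \<otimes> t w)" .
  qed
  show "(\<exists>u. hom C u U (Intg x) \<and> (\<forall>y\<in>X. \<tau> y x \<cdot> u = Ru (A y x) \<cdot> (Idm (A y x) \<otimes> \<epsilon> x y) \<cdot> e y x))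
   \<and> (\<forall>u. hom C u U (Intg x) \<and> (\<forall>y\<in>X. \<tau> y x \<cdot> u = Ru (A y x) \<cdot> (Idm (A y x) \<otimes> \<epsilon> x y) \<cdot> e y x)
        \<longrightarrow> (\<nu> x \<cdot> \<tau> x x) \<cdot> u = Idm U \<and> u \<cdot> (\<nu> x \<cdot> \<tau> x x) = Idm (Intg x))"
  proof (intro conjI allI impI)
    show "\<exists>u. hom C u U (Intg x) \<and> (\<forall>y\<in>X. \<tau> y x \<cdot> u = Ru (A y x) \<cdot> (Idm (A y x) \<otimes> \<epsilon> x y) \<cdot> e y x)"
      using univ[OF tcond] unfolding t_def by blast
  next
    fix u assume H: "hom C u U (Intg x) \<and> (\<forall>y\<in>X. \<tau> y x \<cdot> u = Ru (A y x) \<cdot> (Idm (A y x) \<otimes> \<epsilon> x y) \<cdot> e y x)"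
    have u_ty[simp]: "Arr u" "Dom u = U" "Cod u = Intg x" using H unfolding hom_def by auto
    have tu: "\<tau> y x \<cdot> u = t y" if "y \<in> X" for y using H that unfolding t_def by auto
    show "(\<nu> x \<cdot> \<tau> x x) \<cdot> u = Idm U"
    proof -
      have "(\<nu> x \<cdot> \<tau> x x) \<cdot> u = \<nu> x \<cdot> t x" using xX tu[OF xX] by simp
      also have "\<dots> = Idm U" unfolding t_def
        by (rule part2a[where j = "j x"]) (use xX fr1 eps_j in simp_all)
      finally show ?thesis .
    qed
    define s where "s = \<nu> x \<cdot> \<tau> x x"
    have s_ty[simp]: "Arr s" "Dom s = Intg x" "Cod s = U" unfolding s_def using xX by simp_all
    have key: "t y \<cdot> s = \<tau> y x" if yX: "y \<in> X" for y
    proof -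
      note ctx = yX xX
      let ?b = "A y x" and ?c = "A x y" and ?a = "A x x" and ?T = "Intg x"
      have PL: "Ru ?b \<cdot> (Idm ?b \<otimes> \<nu> x) \<cdot> (m y x x \<otimes> Idm ?a) \<cdot> Ai ?b ?a ?a \<cdot> (Idm ?b \<otimes> e x x) \<cdot> Rui ?b = Idm ?b"
        using ctx suff[OF m_ru[of y x], of "Rui ?b"] by (subst GA) (simp_all add: fr2)
      have "\<tau> y x = Ru ?b \<cdot> (Idm ?b \<otimes> \<nu> x) \<cdot> (m y x x \<otimes> Idm ?a) \<cdot> Ai ?b ?a ?a \<cdot> (Idm ?b \<otimes> e x x) \<cdot> Rui ?b \<cdot> \<tau> y x"
        using suff[OF PL, of "\<tau> y x"] ctx by simp
      also have "\<dots> = Ru ?b \<cdot> (Idm ?b \<otimes> \<nu> x) \<cdot> (Idm ?b \<otimes> m x y x) \<cdot> As ?b ?c ?b \<cdot> (e y x \<otimes> Idm ?b) \<cdot> Lui ?b \<cdot> \<tau> y x"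
        using ctx arg_cong[OF cas[of x x y], of "\<lambda>z. Ru ?b \<cdot> (Idm ?b \<otimes> \<nu> x) \<cdot> z \<cdot> \<tau> y x"] by simp
      also have "\<dots> = Ru ?b \<cdot> (Idm ?b \<otimes> (\<nu> x \<cdot> m x y x)) \<cdot> As ?b ?c ?b \<cdot> (Idm (TO ?b ?c) \<otimes> \<tau> y x) \<cdot> (e y x \<otimes> Idm ?T) \<cdot> Lui ?T"
        using ctx Lui_nat[of "\<tau> y x"] by (simp add: merge1' merge2')
      also have "\<dots> = Ru ?b \<cdot> (Idm ?b \<otimes> (\<nu> x \<cdot> m x y x)) \<cdot> (Idm ?b \<otimes> (Idm ?c \<otimes> \<tau> y x)) \<cdot> As ?b ?c ?T \<cdot> (e y x \<otimes> Idm ?T) \<cdot> Lui ?T"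
        using ctx suff[OF As_nat[of "Idm ?b" "Idm ?c" "\<tau> y x"], of "(e y x \<otimes> Idm ?T) \<cdot> Lui ?T"] by simp
      also have "\<dots> = Ru ?b \<cdot> (Idm ?b \<otimes> (\<nu> x \<cdot> Lu ?a \<cdot> (\<epsilon> x y \<otimes> \<tau> x x))) \<cdot> As ?b ?c ?T \<cdot> (e y x \<otimes> Idm ?T) \<cdot> Lui ?T"
        using ctx tau_int[of x y] by simp
      also have "\<dots> = Ru ?b \<cdot> (Idm ?b \<otimes> (Lu U \<cdot> (\<epsilon> x y \<otimes> s))) \<cdot> As ?b ?c ?T \<cdot> (e y x \<otimes> Idm ?T) \<cdot> Lui ?T"
      proof -
        have "\<nu> x \<cdot> Lu ?a \<cdot> (\<epsilon> x y \<otimes> \<tau> x x) = Lu U \<cdot> (Idm U \<otimes> \<nu> x) \<cdot> (\<epsilon> x y \<otimes> \<tau> x x)"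
          using ctx suff[OF Lu_nat[of "\<nu> x"], of "\<epsilon> x y \<otimes> \<tau> x x"] by simp
        also have "\<dots> = Lu U \<cdot> (\<epsilon> x y \<otimes> s)"
          unfolding s_def using ctx interchange[of "\<epsilon> x y" "Idm U" "\<tau> x x" "\<nu> x"] by simp
        finally show ?thesis by simp
      qed
      also have "\<dots> = t y \<cdot> s"
        unfolding t_def using ctx by (subst GB) simp_all
      finally show ?thesis by simp
    qed
    show "u \<cdot> (\<nu> x \<cdot> \<tau> x x) = Idm (Intg x)"
    proof -
      have h1: "hom C (u \<cdot> s) (Intg x) (Intg x) \<and> (\<forall>y\<in>X. \<tau> y x \<cdot> u \<cdot> s = \<tau> y x)"
        unfolding hom_def using key tu by (auto simp flip: assoc)
      have h2: "hom C (Idm (Intg x)) (Intg x) (Intg x) \<and> (\<forall>y\<in>X. \<tau> y x \<cdot> Idm (Intg x) = \<tau> y x)"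
        unfolding hom_def by simp
      from univ[of "Intg x" "\<lambda>y. \<tau> y x"] LIx h1 h2 have "u \<cdot> s = Idm (Intg x)"
        unfolding left_integral_space_def by blast
      thus ?thesis unfolding s_def .
    qed
  qed
qed

end

theorem mainTheorem5:
  fixes C :: "('o, 'm) moncat" and X :: "'x set" and A :: "'x \<Rightarrow> 'x \<Rightarrow> 'o"
    and m :: "'x \<Rightarrow> 'x \<Rightarrow> 'x \<Rightarrow> 'm" and j :: "'x \<Rightarrow> 'm"
    and \<delta> \<epsilon> :: "'x \<Rightarrow> 'x \<Rightarrow> 'm"
    and e :: "'x \<Rightarrow> 'x \<Rightarrow> 'm" and \<nu> :: "'x \<Rightarrow> 'm"
    and Intg :: "'x \<Rightarrow> 'o" and \<tau> :: "'x \<Rightarrow> 'x \<Rightarrow> 'm"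
  assumes "braided_monoidal_closed C"
    and "semi_hopf_vcategory C X A m j \<delta> \<epsilon>"
    and "frobenius_system C X A m j e \<nu>"
    and "\<forall>z\<in>X. left_integral_space C X A m \<epsilon> z (Intg z) (\<lambda>y. \<tau> y z)"
  shows "\<forall>x\<in>X.
     (\<exists>u. hom C u (mUnit C) (Intg x)
          \<and> (\<forall>y\<in>X. mComp C (\<tau> y x) u
                    = mComp C (mRu C (A y x)) (mComp C (mTens C (mId C (A y x)) (\<epsilon> x y)) (e y x))))
   \<and> (\<forall>u. hom C u (mUnit C) (Intg x)
          \<and> (\<forall>y\<in>X. mComp C (\<tau> y x) u
                    = mComp C (mRu C (A y x)) (mComp C (mTens C (mId C (A y x)) (\<epsilon> x y)) (e y x)))
        \<longrightarrow> mComp C (mComp C (\<nu> x) (\<tau> x x)) u = mId C (mUnit C)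
          \<and> mComp C u (mComp C (\<nu> x) (\<tau> x x)) = mId C (Intg x))"
proof -
  interpret MC C
    using assms(1) unfolding braided_monoidal_closed_def braided_monoidal_category_def
    by unfold_locales blast
  show ?thesis by (rule main[OF assms(2-4)])
qed

end
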